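(* Consider an oracle problem, with either a unitary oracle $O$ or a Hamiltonian oracle $H$, that is compatible with a group $G$. For every time $T$, the set of success probabilities $P_{win}$ achievable by protocols with query time $T$ is unchanged if one restricts attention to $G$-invariant protocols.
   Context: An oracle problem consists of finite-dimensional Hilbert spaces $\mathcal{A},\mathcal{M},\mathcal{M}'$, a pure state $|\psi_0\rangle\in\mathcal{A}$, an oracle given either by a unitary $O$ on $\mathcal{A}\otimes\mathcal{M}$ together with a time step $\Delta>0$ (discrete case) or by a Hermitian $H$ on $\mathcal{A}\otimes\mathcal{M}$ (continuous case), and a set $\{\Pi_x\}$ of positive operators on $\mathcal{A}\otimes\mathcal{M}'$. A protocol with query time $T$ and success probability $P_{win}$ consists of positive-operator-valued functions $\rho(t)$ on $\mathcal{A}$ and $\tilde\rho(t)$ on $\mathcal{A}\otimes\mathcal{M}$, defined for $0\le t\le T$ (for $t$ an integer multiple of $\Delta$ in the discrete case, where $T$ is also a multiple of $\Delta$), together with a positive operator $\tilde\rho'$ on $\mathcal{A}\otimes\mathcal{M}'$. These must satisfy: - $\rho(0)=|\psi_0\rangle\langle\psi_0|$; - $\mathrm{Tr}_{\mathcal{M}}\tilde\rho(t)=\rho(t)$ for all $t$; - in the discrete case, $\rho(t+\Delta)=\mathrm{Tr}_{\mathcal{M}}[O\tilde\rho(t)O^{-1}]$ for $0\le t\le T-\Delta$; - in the continuous case, $\frac{d}{dt}\rho(t)=-i\,\mathrm{Tr}_{\mathcal{M}}[H\tilde\rho(t)-\tilde\rho(t)H]$ for $0\le t\le T$, with $\tilde\rho$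 continuous (or measurable, using the integral form); - $\mathrm{Tr}_{\mathcal{M}'}\tilde\rho'=\rho(T)$; - $P_{win}\le\mathrm{Tr}[\Pi_x\tilde\rho']$ for every $x$. A group $G$ is compatible with the problem if there are unitary representations $R_\mathcal{A},R_\mathcal{M},R_{\mathcal{M}'}$ of $G$ on $\mathcal{A},\mathcal{M},\mathcal{M}'$ satisfying the following conditions for all $g\in G$, where $R(g)=R_\mathcal{A}(g)\otimes R_\mathcal{M}(g)$ and $R'(g)=R_\mathcal{A}(g)\otimes R_{\mathcal{M}'}(g)$: - $R_\mathcal{A}(g)|\psi_0\rangle=|\psi_0\rangle$; - $R(g)OR(g^{-1})=O$ (resp. $R(g)HR(g^{-1})=H$); - $\{R'(g)\Pi_xR'(g^{-1})\}=\{\Pi_x\}$ as sets. A protocol is $G$-invariant if $R(g)\tilde\rho(t)R(g^{-1})=\tilde\rho(t)$ for all $g$ and $t$, and $R'(g)\tilde\rho'R'(g^{-1})=\tilde\rho'$ for all $g$. *)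

theory Defs
  imports "HOL-Analysis.Analysis" "HOL-Algebra.Group"
begin

text \<open>Operators on a finite-dimensional Hilbert space with orthonormal basis indexed
  by a finite type 'i are represented as matrices 'i => 'i => complex.
  The tensor product space A (x) M is indexed by the product type 'a * 'm.\<close>

type_synonym 'i qop = "'i \<Rightarrow> 'i \<Rightarrow> complex"

definition qmul :: "'i::finite qop \<Rightarrow> 'i qop \<Rightarrow> 'i qop" where
  "qmul A B = (\<lambda>i j. \<Sum>k\<in>UNIV. A i k * B k j)"

definition qid :: "'i qop" where
  "qid = (\<lambda>i j. if i = j then 1 else 0)"

definition qadj :: "'i qop \<Rightarrow> 'i qop" where
  "qadj A = (\<lambda>i j. cnj (A j i))"

definition qapply :: "'i::finite qop \<Rightarrow> ('i \<Rightarrow> complex) \<Rightarrow> ('i \<Rightarrow> complex)" where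
  "qapply A v = (\<lambda>i. \<Sum>j\<in>UNIV. A i j * v j)"

definition qunitary :: "'i::finite qop \<Rightarrow> bool" where
  "qunitary U \<longleftrightarrow> qmul U (qadj U) = qid \<and> qmul (qadj U) U = qid"

definition qhermitian :: "'i qop \<Rightarrow> bool" where
  "qhermitian A \<longleftrightarrow> qadj A = A"

definition qpositive :: "'i::finite qop \<Rightarrow> bool" where
  "qpositive A \<longleftrightarrow> qhermitian A \<and>
     (\<forall>v. 0 \<le> Re (\<Sum>i\<in>UNIV. \<Sum>j\<in>UNIV. cnj (v i) * A i j * v j))"

definition qtrace :: "'i::finite qop \<Rightarrow> complex" where
  "qtrace A = (\<Sum>i\<in>UNIV. A i i)"

definition ptrace :: "('a \<times> 'm::finite) qop \<Rightarrow> 'a qop" where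
  "ptrace X = (\<lambda>i j. \<Sum>m\<in>UNIV. X (i, m) (j, m))"

definition kron :: "'a qop \<Rightarrow> 'm qop \<Rightarrow> ('a \<times> 'm) qop" where
  "kron A B = (\<lambda>(i, m) (j, n). A i j * B m n)"

definition qproj :: "('i \<Rightarrow> complex) \<Rightarrow> 'i qop" where
  "qproj \<psi> = (\<lambda>i j. \<psi> i * cnj (\<psi> j))"

definition unit_vec :: "('i::finite \<Rightarrow> complex) \<Rightarrow> bool" where
  "unit_vec \<psi> \<longleftrightarrow> (\<Sum>i\<in>UNIV. (cmod (\<psi> i))\<^sup>2) = 1"

text \<open>A qoracle: either a unitary O with a time step Delta (discrete case) or a
  Hamiltonian H (continuous case), acting on A (x) M.\<close>
datatype 'i qoracle = Discrete "'i \<Rightarrow> 'i \<Rightarrow> complex" real | Continuous "'i \<Rightarrow> 'i \<Rightarrow> complex"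

fun qoracle_op :: "'i qoracle \<Rightarrow> 'i qop" where
  "qoracle_op (Discrete U \<Delta>) = U"
| "qoracle_op (Continuous H) = H"

fun qoracle_wf :: "'i::finite qoracle \<Rightarrow> bool" where
  "qoracle_wf (Discrete U \<Delta>) \<longleftrightarrow> qunitary U \<and> \<Delta> > 0"
| "qoracle_wf (Continuous H) \<longleftrightarrow> qhermitian H"

fun query_times :: "'i qoracle \<Rightarrow> real \<Rightarrow> real set" where
  "query_times (Discrete U \<Delta>) T = {t. \<exists>k::nat. t = real k * \<Delta> \<and> t \<le> T}"
| "query_times (Continuous H) T = {0..T}"

text \<open>A protocol with query time T and success probability P.  In the discrete case the
  inverse O^{-1} of the unitary O is its adjoint.\<close>
definition protocol ::
  "('a::finite \<Rightarrow> complex) \<Rightarrow> ('a \<times> 'm::finite) qoracle \<Rightarrow> ('a \<times> 'n::finite) qop set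
   \<Rightarrow> real \<Rightarrow> real \<Rightarrow> (real \<Rightarrow> 'a qop) \<Rightarrow> (real \<Rightarrow> ('a \<times> 'm) qop) \<Rightarrow> ('a \<times> 'n) qop \<Rightarrow> bool"
  where
  "protocol \<psi>0 orc Pis T P \<rho> \<rho>t \<rho>' \<longleftrightarrow>
     (\<forall>t\<in>query_times orc T. qpositive (\<rho> t) \<and> qpositive (\<rho>t t) \<and> ptrace (\<rho>t t) = \<rho> t) \<and>
     \<rho> 0 = qproj \<psi>0 \<and>
     (case orc of
        Discrete U \<Delta> \<Rightarrow>
          (\<exists>N::nat. T = real N * \<Delta>) \<and>
          (\<forall>k::nat. real (Suc k) * \<Delta> \<le> T \<longrightarrow>
             \<rho> (real (Suc k) * \<Delta>) = ptrace (qmul (qmul U (\<rho>t (real k * \<Delta>))) (qadj U)))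
      | Continuous H \<Rightarrow>
          0 \<le> T \<and>
          (\<forall>i j. continuous_on {0..T} (\<lambda>s. \<rho>t s i j)) \<and>
          (\<forall>t\<in>{0..T}. \<forall>i j.
             ((\<lambda>s. \<rho> s i j) has_vector_derivative
                (- \<i> * ptrace (\<lambda>x y. qmul H (\<rho>t t) x y - qmul (\<rho>t t) H x y) i j))
             (at t within {0..T}))) \<and>
     qpositive \<rho>' \<and> ptrace \<rho>' = \<rho> T \<and>
     (\<forall>Pr\<in>Pis. P \<le> Re (qtrace (qmul Pr \<rho>')))"

definition unitary_rep :: "('g, 'b) monoid_scheme \<Rightarrow> ('g \<Rightarrow> 'i::finite qop) \<Rightarrow> bool" where
  "unitary_rep G R \<longleftrightarrow>
     (\<forall>g\<in>carrier G. qunitary (R g)) \<and>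
     R \<one>\<^bsub>G\<^esub> = qid \<and>
     (\<forall>g\<in>carrier G. \<forall>h\<in>carrier G. R (g \<otimes>\<^bsub>G\<^esub> h) = qmul (R g) (R h))"

definition conj_by :: "'i::finite qop \<Rightarrow> 'i qop \<Rightarrow> 'i qop \<Rightarrow> 'i qop" where
  "conj_by U X V = qmul (qmul U X) V"

definition compatible ::
  "('g, 'b) monoid_scheme \<Rightarrow> ('g \<Rightarrow> 'a::finite qop) \<Rightarrow> ('g \<Rightarrow> 'm::finite qop) \<Rightarrow> ('g \<Rightarrow> 'n::finite qop)
   \<Rightarrow> ('a \<Rightarrow> complex) \<Rightarrow> ('a \<times> 'm) qoracle \<Rightarrow> ('a \<times> 'n) qop set \<Rightarrow> bool" where
  "compatible G RA RM RM' \<psi>0 orc Pis \<longleftrightarrow>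
     group G \<and> unitary_rep G RA \<and> unitary_rep G RM \<and> unitary_rep G RM' \<and>
     (\<forall>g\<in>carrier G. qapply (RA g) \<psi>0 = \<psi>0) \<and>
     (\<forall>g\<in>carrier G. conj_by (kron (RA g) (RM g)) (qoracle_op orc)
                        (kron (RA (inv\<^bsub>G\<^esub> g)) (RM (inv\<^bsub>G\<^esub> g))) = qoracle_op orc) \<and>
     (\<forall>g\<in>carrier G. (\<lambda>Pr. conj_by (kron (RA g) (RM' g)) Pr
                        (kron (RA (inv\<^bsub>G\<^esub> g)) (RM' (inv\<^bsub>G\<^esub> g)))) ` Pis = Pis)"

definition invariant_protocol ::
  "('g, 'b) monoid_scheme \<Rightarrow> ('g \<Rightarrow> 'a::finite qop) \<Rightarrow> ('g \<Rightarrow> 'm::finite qop) \<Rightarrow> ('g \<Rightarrow> 'n::finite qop)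
   \<Rightarrow> ('a \<times> 'm) qoracle \<Rightarrow> real \<Rightarrow> (real \<Rightarrow> ('a \<times> 'm) qop) \<Rightarrow> ('a \<times> 'n) qop \<Rightarrow> bool" where
  "invariant_protocol G RA RM RM' orc T \<rho>t \<rho>' \<longleftrightarrow>
     (\<forall>g\<in>carrier G. \<forall>t\<in>query_times orc T.
        conj_by (kron (RA g) (RM g)) (\<rho>t t) (kron (RA (inv\<^bsub>G\<^esub> g)) (RM (inv\<^bsub>G\<^esub> g))) = \<rho>t t) \<and>
     (\<forall>g\<in>carrier G.
        conj_by (kron (RA g) (RM' g)) \<rho>' (kron (RA (inv\<^bsub>G\<^esub> g)) (RM' (inv\<^bsub>G\<^esub> g))) = \<rho>')"

end

theory Submission
  imports Defs
begin

lemma sum_UNIV_prod: "(\<Sum>x\<in>(UNIV::('a::finite\<times>'b::finite) set). f x) = (\<Sum>a\<in>UNIV. \<Sum>b\<in>UNIV. f (a,b))"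
  by (simp add: sum.cartesian_product flip: UNIV_Times_UNIV)

lemma qmul_assoc: "qmul (qmul A B) C = qmul A (qmul B C)"
  unfolding qmul_def
  by (auto simp: fun_eq_iff sum_distrib_left sum_distrib_right mult.assoc intro: sum.swap)

lemma qmul_qid_left[simp]: "qmul qid A = A"
  by (simp add: qmul_def qid_def fun_eq_iff mult_if_delta)

lemma qmul_qid_right[simp]: "qmul A qid = A"
proof -
  have "\<And>x y. (\<Sum>k\<in>UNIV. A x k * (if k = y then 1 else 0)) = A x y"
    by (simp add: if_distrib[of "\<lambda>z. _ * z"] cong: if_cong)
  then show ?thesis by (simp add: qmul_def qid_def fun_eq_iff)
qed

lemma qadj_qmul: "qadj (qmul A B) = qmul (qadj B) (qadj A)"
  by (simp add: qadj_def qmul_def fun_eq_iff mult.commute)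

lemma qadj_qadj[simp]: "qadj (qadj A) = A"
  by (simp add: qadj_def)

lemma qadj_qid[simp]: "qadj qid = qid"
  by (simp add: qadj_def qid_def fun_eq_iff)

lemma qtrace_comm: "qtrace (qmul A B) = qtrace (qmul B A)"
  unfolding qtrace_def qmul_def by (subst sum.swap) (simp add: mult.commute)

lemma kron_mult: "qmul (kron A B) (kron C D) = kron (qmul A C) (qmul B D)"
  unfolding qmul_def kron_def
  by (auto simp: fun_eq_iff sum_UNIV_prod sum_product mult_ac)

lemma qadj_kron: "qadj (kron A B) = kron (qadj A) (qadj B)"
  by (auto simp: qadj_def kron_def fun_eq_iff)

lemma kron_qid: "kron qid qid = qid"
  by (auto simp: qid_def kron_def fun_eq_iff)

lemma qunitary_kron: "qunitary A \<Longrightarrow> qunitary B \<Longrightarrow> qunitary (kron A B)"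
  by (simp add: qunitary_def qadj_kron kron_mult kron_qid)

lemma qunitary_qadj: "qunitary A \<Longrightarrow> qunitary (qadj A)"
  by (simp add: qunitary_def)

type_synonym 'i sop = "complex ^ ('i \<times> 'i \<times> 'i \<times> 'i)"

definition sapp :: "'i::finite sop \<Rightarrow> 'i qop \<Rightarrow> 'i qop" where
  "sapp S X = (\<lambda>i j. \<Sum>k\<in>UNIV. \<Sum>l\<in>UNIV. S $ (i,j,k,l) * X k l)"

definition adS :: "'i::finite qop \<Rightarrow> 'i sop" where
  "adS R = (\<chi> x. case x of (i,j,k,l) \<Rightarrow> R i k * cnj (R j l))"

definition lcomp :: "'i::finite qop \<Rightarrow> 'i sop \<Rightarrow> 'i sop" where
  "lcomp R S = (\<chi> x. case x of (i,j,k,l) \<Rightarrow> \<Sum>p\<in>UNIV. \<Sum>q\<in>UNIV. R i p * S $ (p,q,k,l) * cnj (R j q))"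

lemma adS_nth[simp]: "adS R $ (i,j,k,l) = R i k * cnj (R j l)"
  by (simp add: adS_def)

lemma lcomp_nth[simp]: "lcomp R S $ (i,j,k,l) = (\<Sum>p\<in>UNIV. \<Sum>q\<in>UNIV. R i p * S $ (p,q,k,l) * cnj (R j q))"
  by (simp add: lcomp_def)

lemma sapp_adS: "sapp (adS R) X = qmul (qmul R X) (qadj R)"
  unfolding sapp_def qmul_def qadj_def
  apply (simp add: fun_eq_iff sum_distrib_right sum_distrib_left)
  apply (intro allI, rule trans[OF _ sum.swap])
  apply (simp add: mult_ac)
  done

lemma sum4_swap:
  "(\<Sum>k\<in>A. \<Sum>l\<in>B. \<Sum>p\<in>C. \<Sum>q\<in>D. F k l p q) = (\<Sum>q\<in>D. \<Sum>p\<in>C. \<Sum>k\<in>A. \<Sum>l\<in>B. F k l p q)"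
proof -
  have "(\<Sum>k\<in>A. \<Sum>l\<in>B. \<Sum>p\<in>C. \<Sum>q\<in>D. F k l p q) = (\<Sum>k\<in>A. \<Sum>p\<in>C. \<Sum>l\<in>B. \<Sum>q\<in>D. F k l p q)"
    by (rule sum.cong[OF refl], rule sum.swap)
  also have "\<dots> = (\<Sum>k\<in>A. \<Sum>p\<in>C. \<Sum>q\<in>D. \<Sum>l\<in>B. F k l p q)"
    by (rule sum.cong[OF refl], rule sum.cong[OF refl], rule sum.swap)
  also have "\<dots> = (\<Sum>p\<in>C. \<Sum>k\<in>A. \<Sum>q\<in>D. \<Sum>l\<in>B. F k l p q)"
    by (rule sum.swap)
  also have "\<dots> = (\<Sum>p\<in>C. \<Sum>q\<in>D. \<Sum>k\<in>A. \<Sum>l\<in>B. F k l p q)"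
    by (rule sum.cong[OF refl], rule sum.swap)
  also have "\<dots> = (\<Sum>q\<in>D. \<Sum>p\<in>C. \<Sum>k\<in>A. \<Sum>l\<in>B. F k l p q)"
    by (rule sum.swap)
  finally show ?thesis .
qed

lemma sapp_lcomp: "sapp (lcomp R S) X = qmul (qmul R (sapp S X)) (qadj R)"
  unfolding sapp_def qmul_def qadj_def
  apply (simp add: fun_eq_iff sum_distrib_right sum_distrib_left)
  apply (intro allI)
  apply (subst sum4_swap)
  apply (simp add: mult_ac)
  done

lemma lcomp_adS: "lcomp R (adS Q) = adS (qmul R Q)"
  unfolding vec_eq_iff
  apply (auto simp: qmul_def sum_distrib_right sum_distrib_left sum_product)
  apply (rule trans[OF _ sum.swap])
  apply (simp add: mult_ac)
  done

lemma linear_lcomp: "linear (lcomp R)"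
  apply (rule linearI)
   apply (auto simp: vec_eq_iff sum.distrib algebra_simps sum_distrib_left)
  apply (auto simp: scaleR_conv_of_real sum_distrib_left mult_ac)
  done
definition fro :: "'i::finite qop \<Rightarrow> real" where
  "fro Y = (\<Sum>i\<in>UNIV. \<Sum>j\<in>UNIV. (cmod (Y i j))\<^sup>2)"

lemma fro_trace: "complex_of_real (fro Y) = qtrace (qmul Y (qadj Y))"
  by (simp add: fro_def qtrace_def qmul_def qadj_def flip: complex_norm_square)

lemma qunitary_D: "qunitary U \<Longrightarrow> qmul U (qadj U) = qid" "qunitary U \<Longrightarrow> qmul (qadj U) U = qid"
  by (simp_all add: qunitary_def)

lemma fro_conj: assumes "qunitary R" shows "fro (qmul (qmul R Y) (qadj R)) = fro Y"
proof -
  have "complex_of_real (fro (qmul (qmul R Y) (qadj R))) = 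
     qtrace (qmul (qmul (qmul R Y) (qadj R)) (qmul (qmul R (qadj Y)) (qadj R)))"
    by (simp add: fro_trace qadj_qmul qmul_assoc)
  also have "\<dots> = qtrace (qmul (qmul R (qmul Y (qadj Y))) (qadj R))"
    by (simp add: qmul_assoc qunitary_D(2)[OF assms, unfolded qmul_assoc[symmetric]] 
         flip: qmul_assoc[of "qadj R" R])
  also have "\<dots> = qtrace (qmul (qmul (qadj R) R) (qmul Y (qadj Y)))"
    by (metis qtrace_comm qmul_assoc)
  also have "\<dots> = complex_of_real (fro Y)"
    by (simp add: qunitary_D[OF assms] fro_trace)
  finally show ?thesis by simp
qed

lemma norm_sop: "norm (S::'i::finite sop) = sqrt (\<Sum>i\<in>UNIV. \<Sum>j\<in>UNIV. \<Sum>k\<in>UNIV. \<Sum>l\<in>UNIV. (cmod (S $ (i,j,k,l)))\<^sup>2)"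
  by (simp add: norm_vec_def L2_set_def sum_UNIV_prod)

lemma norm_lcomp: assumes "qunitary R" shows "norm (lcomp R S) = norm S"
proof -
  have e: "fro (qmul (qmul R (\<lambda>p q. S $ (p,q,k,l))) (qadj R)) = fro (\<lambda>p q. S $ (p,q,k,l))" for k l
    by (rule fro_conj[OF assms])
  have e2: "(\<Sum>i\<in>UNIV. \<Sum>j\<in>UNIV. (cmod (lcomp R S $ (i,j,k,l)))\<^sup>2) = (\<Sum>i\<in>UNIV. \<Sum>j\<in>UNIV. (cmod (S $ (i,j,k,l)))\<^sup>2)" for k l
  proof -
    have "lcomp R S $ (i,j,k,l) = qmul (qmul R (\<lambda>p q. S $ (p,q,k,l))) (qadj R) i j" for i j
      unfolding lcomp_nth qmul_def qadj_def
      by (subst sum.swap) (simp add: sum_distrib_right sum_distrib_left mult_ac)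
    then show ?thesis using e[of k l] by (simp add: fro_def)
  qed
  show ?thesis unfolding norm_sop
    apply (subst (1 2) sum4_swap)
    apply (simp del: lcomp_nth add: e2)
    done
qed

lemma dl1[simp]: "(if P then 1 else 0) * (x::complex) = (if P then x else 0)" by simp
lemma dl2[simp]: "(x::complex) * (if P then 1 else 0) = (if P then x else 0)" by simp
lemma dl3[simp]: "(if P then x else 0) * (y::complex) = (if P then x * y else 0)" by simp
lemma dl4[simp]: "(y::complex) * (if P then x else 0) = (if P then y * x else 0)" by simp

lemma sum_if_const[simp]: "(\<Sum>b\<in>A. if P then f b else (0::complex)) = (if P then (\<Sum>b\<in>A. f b) else 0)"
  by simp

lemma kl1: "qmul (kron A qid) Y (i,m) c = (\<Sum>k\<in>UNIV. A i k * Y (k,m) c)"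
  unfolding qmul_def kron_def qid_def by (simp add: sum_UNIV_prod)
lemma kr1: "qmul Z (kron C qid) r (j,m) = (\<Sum>l\<in>UNIV. Z r (l,m) * C l j)"
  unfolding qmul_def kron_def qid_def by (simp add: sum_UNIV_prod)
lemma kl2: "qmul (kron qid B) Y (i,m) c = (\<Sum>p\<in>UNIV. B m p * Y (i,p) c)"
  unfolding qmul_def kron_def qid_def by (simp add: sum_UNIV_prod)
lemma kr2: "qmul Z (kron qid D) r (j,m) = (\<Sum>q\<in>UNIV. Z r (j,q) * D q m)"
  unfolding qmul_def kron_def qid_def by (simp add: sum_UNIV_prod)

lemma sum3_swap: "(\<Sum>m\<in>A. \<Sum>l\<in>B. \<Sum>k\<in>C. F m l k) = (\<Sum>l\<in>B. \<Sum>k\<in>C. \<Sum>m\<in>A. F m l k)"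
proof -
  have "(\<Sum>m\<in>A. \<Sum>l\<in>B. \<Sum>k\<in>C. F m l k) = (\<Sum>l\<in>B. \<Sum>m\<in>A. \<Sum>k\<in>C. F m l k)"
    by (rule sum.swap)
  also have "\<dots> = (\<Sum>l\<in>B. \<Sum>k\<in>C. \<Sum>m\<in>A. F m l k)"
    by (rule sum.cong[OF refl], rule sum.swap)
  finally show ?thesis .
qed

lemma pt1: "ptrace (qmul (qmul (kron A qid) Y) (kron C qid)) = qmul (qmul A (ptrace Y)) C"
proof -
  have "ptrace (qmul (qmul (kron A qid) Y) (kron C qid)) i j =
     (\<Sum>m\<in>UNIV. \<Sum>l\<in>UNIV. \<Sum>k\<in>UNIV. A i k * Y (k,m) (l,m) * C l j)" for i j
    by (simp add: ptrace_def kr1 kl1 sum_distrib_right)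
  also have "\<dots> i j = qmul (qmul A (ptrace Y)) C i j" for i j
    by (subst sum3_swap) (simp add: qmul_def ptrace_def sum_distrib_left sum_distrib_right mult_ac)
  finally show ?thesis by (simp add: fun_eq_iff)
qed

lemma pt2: assumes "qmul D B = qid"
  shows "ptrace (qmul (qmul (kron qid B) Y) (kron qid D)) = ptrace Y"
proof -
  have dd: "(\<Sum>m\<in>UNIV. D q m * B m p) = (if q = p then 1 else 0)" for q p
    using assms by (simp add: qmul_def qid_def fun_eq_iff)
  have "ptrace (qmul (qmul (kron qid B) Y) (kron qid D)) i j =
     (\<Sum>m\<in>UNIV. \<Sum>q\<in>UNIV. \<Sum>p\<in>UNIV. Y (i,p) (j,q) * (D q m * B m p))" for i j
    by (simp add: ptrace_def kr2 kl2 sum_distrib_right sum_distrib_left mult_ac)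
  also have "\<dots> i j = (\<Sum>q\<in>UNIV. \<Sum>p\<in>UNIV. Y (i,p) (j,q) * (\<Sum>m\<in>UNIV. D q m * B m p))" for i j
    by (subst sum3_swap) (simp add: sum_distrib_left)
  also have "\<dots> i j = ptrace Y i j" for i j
    by (simp add: dd ptrace_def if_distrib cong: if_cong)
  finally show ?thesis by (simp add: fun_eq_iff)
qed

lemma qproj_conj: assumes "qapply R \<psi> = \<psi>"
  shows "qmul (qmul R (qproj \<psi>)) (qadj R) = qproj \<psi>"
proof -
  have e: "(\<Sum>k\<in>UNIV. R i k * \<psi> k) = \<psi> i" for i
    using assms by (simp add: qapply_def fun_eq_iff)
  have "qmul (qmul R (qproj \<psi>)) (qadj R) i j = (\<Sum>k\<in>UNIV. R i k * \<psi> k) * cnj (\<Sum>l\<in>UNIV. R j l * \<psi> l)" for i j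
    unfolding qmul_def qproj_def qadj_def
    apply (simp add: sum_distrib_left sum_distrib_right)
    apply (rule trans[OF _ sum.swap])
    apply (simp add: mult_ac)
    apply (rule sum.swap)
    done
  then show ?thesis by (simp add: e fun_eq_iff qproj_def)
qed

lemma pos_conj: assumes "qpositive X" shows "qpositive (qmul (qmul R X) (qadj R))"
proof -
  have h: "qadj X = X" using assms by (simp add: qpositive_def qhermitian_def)
  have "qhermitian (qmul (qmul R X) (qadj R))"
    by (simp add: qhermitian_def qadj_qmul h qmul_assoc)
  moreover have "0 \<le> Re (\<Sum>i\<in>UNIV. \<Sum>j\<in>UNIV. cnj (v i) * qmul (qmul R X) (qadj R) i j * v j)" for v
  proof -
    define w where "w = (\<lambda>l. \<Sum>j\<in>UNIV. cnj (R j l) * v j)"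
    have "(\<Sum>i\<in>UNIV. \<Sum>j\<in>UNIV. cnj (v i) * qmul (qmul R X) (qadj R) i j * v j)
       = (\<Sum>i\<in>UNIV. \<Sum>j\<in>UNIV. \<Sum>l\<in>UNIV. \<Sum>k\<in>UNIV. cnj (v i) * R i k * X k l * cnj (R j l) * v j)"
      unfolding qmul_def qadj_def by (simp add: sum_distrib_left sum_distrib_right mult_ac)
    also have "\<dots> = (\<Sum>k\<in>UNIV. \<Sum>l\<in>UNIV. \<Sum>i\<in>UNIV. \<Sum>j\<in>UNIV. cnj (v i) * R i k * X k l * cnj (R j l) * v j)"
      by (rule sum4_swap)
    also have "\<dots> = (\<Sum>k\<in>UNIV. \<Sum>l\<in>UNIV. cnj (w k) * X k l * w l)"
      unfolding w_def by (simp add: sum_distrib_left sum_distrib_right mult_ac sum_product)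
    finally show ?thesis using assms by (simp add: qpositive_def)
  qed
  ultimately show ?thesis by (simp add: qpositive_def)
qed

lemma comm_conj: assumes "qunitary Q" "qmul (qmul Q B) (qadj Q) = B"
  shows "qmul Q B = qmul B Q"
proof -
  have "qmul B Q = qmul (qmul (qmul Q B) (qadj Q)) Q" using assms(2) by simp
  also have "\<dots> = qmul Q B" by (simp add: qmul_assoc qunitary_D[OF assms(1)])
  finally show ?thesis by simp
qed

lemma comm_conj_adj: assumes "qunitary Q" "qmul (qmul Q B) (qadj Q) = B"
  shows "qmul (qmul Q (qadj B)) (qadj Q) = qadj B"
proof -
  have "qadj (qmul (qmul Q B) (qadj Q)) = qadj B" using assms(2) by simp
  then show ?thesis by (simp add: qadj_qmul qmul_assoc)
qed

lemma sapp_adS_comm: assumes "qunitary Q" "qmul (qmul Q B) (qadj Q) = B"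
  shows "sapp (adS Q) (qmul B X) = qmul B (sapp (adS Q) X)"
    and "sapp (adS Q) (qmul X B) = qmul (sapp (adS Q) X) B"
proof -
  have c: "qmul Q B = qmul B Q" by (rule comm_conj[OF assms])
  have c2: "qmul B (qadj Q) = qmul (qadj Q) B"
  proof -
    have "qmul (qadj Q) (qmul (qmul Q B) (qadj Q)) = qmul (qadj Q) B" using assms(2) by simp
    then show ?thesis by (simp add: qmul_assoc flip: qmul_assoc[of "qadj Q" Q] add: qunitary_D[OF assms(1)])
  qed
  show "sapp (adS Q) (qmul B X) = qmul B (sapp (adS Q) X)"
    by (simp add: sapp_adS qmul_assoc flip: qmul_assoc[of Q B] add: c)
  show "sapp (adS Q) (qmul X B) = qmul (sapp (adS Q) X) B"
    by (simp add: sapp_adS qmul_assoc c2)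
qed

lemma trace_conj: "qtrace (qmul Pr (qmul (qmul Q X) (qadj Q))) = qtrace (qmul (qmul (qmul (qadj Q) Pr) Q) X)"
  by (metis qtrace_comm qmul_assoc)

section \<open>Linearity and closed convex sets\<close>

lemma lin_sum: "(\<And>i. linear (f i)) \<Longrightarrow> linear (\<lambda>S. \<Sum>i\<in>A. f i S)"
  by (rule linear_compose_sum) auto

lemma lin_cmul: "linear f \<Longrightarrow> linear (\<lambda>S. (c::complex) * f S)"
  by (rule linearI) (auto simp: linear_add linear_scale scaleR_conv_of_real algebra_simps)

lemma lin_mulc: "linear f \<Longrightarrow> linear (\<lambda>S. f S * (c::complex))"
  by (rule linearI) (auto simp: linear_add linear_scale scaleR_conv_of_real algebra_simps)

lemma lin_cnj: "linear f \<Longrightarrow> linear (\<lambda>S. cnj (f S :: complex))"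
  by (rule linearI) (auto simp: linear_add linear_scale scaleR_conv_of_real)

lemma lin_entry: "linear f \<Longrightarrow> linear (\<lambda>S. f S $ x)"
  by (rule linearI) (auto simp: linear_add linear_scale)

lemma lin_sapp: "linear f \<Longrightarrow> linear (\<lambda>S. sapp (f S) X i j)"
  unfolding sapp_def by (intro lin_sum lin_mulc lin_entry)

lemma lin_ptrace: "(\<And>i j. linear (\<lambda>S. F S i j)) \<Longrightarrow> linear (\<lambda>S. ptrace (F S) i j)"
  unfolding ptrace_def by (intro lin_sum) auto

lemma lin_qmul_l: "(\<And>i j. linear (\<lambda>S. F S i j)) \<Longrightarrow> linear (\<lambda>S. qmul B (F S) i j)"
  unfolding qmul_def by (intro lin_sum lin_cmul) auto

lemma lin_qmul_r: "(\<And>i j. linear (\<lambda>S. F S i j)) \<Longrightarrow> linear (\<lambda>S. qmul (F S) B i j)"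
  unfolding qmul_def by (intro lin_sum lin_mulc) auto

lemma lin_trace: "(\<And>i j. linear (\<lambda>S. F S i j)) \<Longrightarrow> linear (\<lambda>S. qtrace (qmul B (F S)))"
  unfolding qtrace_def by (intro lin_sum lin_qmul_l) auto

definition cc :: "'e::euclidean_space set \<Rightarrow> bool" where
  "cc A \<longleftrightarrow> closed A \<and> convex A"

lemma cont_lin: "linear (f::'e::euclidean_space \<Rightarrow> complex) \<Longrightarrow> continuous_on UNIV f"
  by (simp add: linear_conv_bounded_linear linear_continuous_on)

lemma cc_eq1: fixes f g :: "'e::euclidean_space \<Rightarrow> complex"
  assumes "linear f" "linear g" shows "cc {S. f S = g S}"
proof -
  have "closed {S. f S = g S}"
    by (intro closed_Collect_eq cont_lin assms)
  moreover have "convex {S. f S = g S}"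
    unfolding convex_def using assms by (auto simp: linear_add linear_scale)
  ultimately show ?thesis by (simp add: cc_def)
qed

lemma cc_eqc1: fixes f :: "'e::euclidean_space \<Rightarrow> complex"
  assumes "linear f" shows "cc {S. f S = c}"
proof -
  have "closed {S. f S = c}"
    by (intro closed_Collect_eq cont_lin assms continuous_on_const)
  moreover have "convex {S. f S = c}"
  proof (unfold convex_def, intro ballI allI impI)
    fix x y :: 'e and u v :: real assume xy: "x \<in> {S. f S = c}" "y \<in> {S. f S = c}" and "0 \<le> u" "0 \<le> v" "u + v = 1"
    then have "f x = c" "f y = c" by auto
    have "f (u *\<^sub>R x + v *\<^sub>R y) = u *\<^sub>R f x + v *\<^sub>R f y"
      using assms by (simp add: linear_add linear_scale)
    also have "\<dots> = (u + v) *\<^sub>R c" using \<open>f x = c\<close> \<open>f y = c\<close> by (simp add: scaleR_add_left)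
    finally have "f (u *\<^sub>R x + v *\<^sub>R y) = (u + v) *\<^sub>R c" .
    then show "u *\<^sub>R x + v *\<^sub>R y \<in> {S. f S = c}" using \<open>u + v = 1\<close> by simp
  qed
  ultimately show ?thesis by (simp add: cc_def)
qed

lemma cc_ge: fixes f :: "'e::euclidean_space \<Rightarrow> complex"
  assumes "linear f" shows "cc {S. c \<le> Re (f S)}"
proof -
  have "continuous_on UNIV (\<lambda>S. Re (f S))"
    by (intro continuous_intros cont_lin assms)
  then have "closed {S. c \<le> Re (f S)}"
    by (intro closed_Collect_le continuous_on_const)
  moreover have "convex {S. c \<le> Re (f S)}"
  proof (unfold convex_def, safe)
    fix x y :: 'e and u v :: real assume "u + v = 1" "0 \<le> u" "0 \<le> v" "c \<le> Re (f x)" "c \<le> Re (f y)"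
    then have "u * c + v * c \<le> u * Re (f x) + v * Re (f y)"
      by (intro add_mono mult_left_mono) auto
    moreover have "Re (f (u *\<^sub>R x + v *\<^sub>R y)) = u * Re (f x) + v * Re (f y)"
      using assms by (simp add: linear_add linear_scale)
    ultimately show "c \<le> Re (f (u *\<^sub>R x + v *\<^sub>R y))" using \<open>u + v = 1\<close>
      by (metis distrib_right mult_1)
  qed
  ultimately show ?thesis by (simp add: cc_def)
qed

lemma cc_all: "(\<And>x. cc {S. P x S}) \<Longrightarrow> cc {S. \<forall>x. P x S}"
proof -
  assume a: "\<And>x. cc {S. P x S}"
  have e: "{S. \<forall>x. P x S} = (\<Inter>x\<in>UNIV. {S. P x S})" by auto
  show ?thesis unfolding e cc_def using a unfolding cc_def
    by (intro conjI closed_INT convex_INT) auto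
qed

lemma cc_ball: "(\<And>x. x \<in> A \<Longrightarrow> cc {S. P x S}) \<Longrightarrow> cc {S. \<forall>x\<in>A. P x S}"
proof -
  assume a: "\<And>x. x \<in> A \<Longrightarrow> cc {S. P x S}"
  have e: "{S. \<forall>x\<in>A. P x S} = (\<Inter>x\<in>A. {S. P x S})" by auto
  show ?thesis unfolding e cc_def using a unfolding cc_def
    by (intro conjI closed_INT convex_INT) auto
qed

lemma cc_conj: "cc {S. P S} \<Longrightarrow> cc {S. Q S} \<Longrightarrow> cc {S. P S \<and> Q S}"
proof -
  assume "cc {S. P S}" "cc {S. Q S}"
  moreover have "{S. P S \<and> Q S} = {S. P S} \<inter> {S. Q S}" by auto
  ultimately show ?thesis by (simp add: cc_def closed_Int convex_Int)
qed

lemma cc_eqF: fixes F G :: "'e::euclidean_space \<Rightarrow> 'i \<Rightarrow> 'j \<Rightarrow> complex"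
  assumes "\<And>i j. linear (\<lambda>S. F S i j)" "\<And>i j. linear (\<lambda>S. G S i j)"
  shows "cc {S. F S = G S}"
proof -
  have e: "{S. F S = G S} = {S. \<forall>i j. F S i j = G S i j}" by (auto simp: fun_eq_iff)
  show ?thesis unfolding e by (intro cc_all cc_eq1 assms)
qed

lemma cc_eqFc: fixes F :: "'e::euclidean_space \<Rightarrow> 'i \<Rightarrow> 'j \<Rightarrow> complex"
  assumes "\<And>i j. linear (\<lambda>S. F S i j)"
  shows "cc {S. F S = C}"
proof -
  have e: "{S. F S = C} = {S. \<forall>i j. F S i j = C i j}" by (auto simp: fun_eq_iff)
  show ?thesis unfolding e by (intro cc_all cc_eqc1 assms)
qed

lemma cc_pos: fixes F :: "'e::euclidean_space \<Rightarrow> 'i::finite qop"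
  assumes l: "\<And>i j. linear (\<lambda>S. F S i j)"
  shows "cc {S. qpositive (F S)}"
proof -
  have "{S. qpositive (F S)} = {S. (\<forall>i j. cnj (F S j i) = F S i j) \<and>
     (\<forall>v. 0 \<le> Re (\<Sum>i\<in>UNIV. \<Sum>j\<in>UNIV. cnj (v i) * F S i j * v j))}"
    by (auto simp: qpositive_def qhermitian_def qadj_def fun_eq_iff)
  moreover have "cc \<dots>"
    by (intro cc_conj cc_all cc_eq1 cc_ge lin_cnj lin_sum lin_mulc lin_cmul l)
  ultimately show ?thesis by simp
qed

section \<open>Representations\<close>

lemma rep_unitary: "unitary_rep G R \<Longrightarrow> g \<in> carrier G \<Longrightarrow> qunitary (R g)"
  by (simp add: unitary_rep_def)

lemma rep_mult: "unitary_rep G R \<Longrightarrow> g \<in> carrier G \<Longrightarrow> h \<in> carrier G \<Longrightarrow> R (g \<otimes>\<^bsub>G\<^esub> h) = qmul (R g) (R h)"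
  by (simp add: unitary_rep_def)

lemma rep_inv: assumes "group G" "unitary_rep G R" "g \<in> carrier G"
  shows "R (inv\<^bsub>G\<^esub> g) = qadj (R g)"
proof -
  have ic: "inv\<^bsub>G\<^esub> g \<in> carrier G" using assms by (simp add: group.inv_closed)
  have "qmul (R g) (R (inv\<^bsub>G\<^esub> g)) = qid"
    using assms rep_mult[OF assms(2) assms(3) ic] by (simp add: group.r_inv unitary_rep_def)
  then have "qmul (qadj (R g)) (qmul (R g) (R (inv\<^bsub>G\<^esub> g))) = qadj (R g)" by simp
  then show ?thesis
    by (simp flip: qmul_assoc add: qunitary_D[OF rep_unitary[OF assms(2,3)]])
qed

type_synonym ('a, 'm, 'n) E3 = "'a sop \<times> ('a \<times> 'm) sop \<times> ('a \<times> 'n) sop"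

definition PsiE :: "('g \<Rightarrow> 'a::finite qop) \<Rightarrow> ('g \<Rightarrow> 'm::finite qop) \<Rightarrow> ('g \<Rightarrow> 'n::finite qop) \<Rightarrow> 'g \<Rightarrow> ('a, 'm, 'n) E3" where
  "PsiE RA RM RM' h = (adS (RA h), adS (kron (RA h) (RM h)), adS (kron (RA h) (RM' h)))"

definition LgE :: "('g \<Rightarrow> 'a::finite qop) \<Rightarrow> ('g \<Rightarrow> 'm::finite qop) \<Rightarrow> ('g \<Rightarrow> 'n::finite qop) \<Rightarrow> 'g \<Rightarrow> ('a, 'm, 'n) E3 \<Rightarrow> ('a, 'm, 'n) E3" where
  "LgE RA RM RM' g S = (lcomp (RA g) (fst S), lcomp (kron (RA g) (RM g)) (fst (snd S)), lcomp (kron (RA g) (RM' g)) (snd (snd S)))"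

lemma linear_LgE: "linear (LgE RA RM RM' g)"
  by (rule linearI) (simp_all add: LgE_def linear_add[OF linear_lcomp] linear_scale[OF linear_lcomp])

lemma fixed_point:
  assumes G: "group G" and rA: "unitary_rep G RA" and rM: "unitary_rep G RM" and rN: "unitary_rep G RM'"
  defines "K \<equiv> closure (convex hull (PsiE RA RM RM' ` carrier G))"
  shows "\<exists>S0\<in>K. \<forall>g\<in>carrier G. LgE RA RM RM' g S0 = S0"
proof -
  have cK: "closed K" "convex K" unfolding K_def by auto
  have ne: "K \<noteq> {}" unfolding K_def using monoid.one_closed[OF group.is_monoid[OF G]]
    by (auto simp: closure_eq_empty convex_hull_eq_empty)
  define S0 where "S0 = closest_point K 0"
  have S0K: "S0 \<in> K" unfolding S0_def by (rule closest_point_in_set[OF cK(1) ne])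
  have min: "\<forall>y\<in>K. dist 0 S0 \<le> dist 0 y" unfolding S0_def using closest_point_exists(2)[OF cK(1) ne] by blast
  have inv: "LgE RA RM RM' g ` K \<subseteq> K" if g: "g \<in> carrier G" for g
  proof -
    let ?L = "LgE RA RM RM' g"
    let ?P = "PsiE RA RM RM' ` carrier G"
    have "?L ` ?P \<subseteq> ?P"
    proof
      fix x assume "x \<in> ?L ` ?P"
      then obtain h where h: "h \<in> carrier G" "x = ?L (PsiE RA RM RM' h)" by auto
      have "x = PsiE RA RM RM' (g \<otimes>\<^bsub>G\<^esub> h)"
        using h g by (simp add: LgE_def PsiE_def lcomp_adS kron_mult rep_mult[OF rA] rep_mult[OF rM] rep_mult[OF rN])
      then show "x \<in> ?P" using h g G by (simp add: group.is_monoid monoid.m_closed)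
    qed
    then have "?L ` (convex hull ?P) \<subseteq> convex hull ?P"
      by (simp add: convex_hull_linear_image[OF linear_LgE] hull_mono)
    then have "?L ` (convex hull ?P) \<subseteq> K"
      unfolding K_def using closure_subset by blast
    moreover have "continuous_on (closure (convex hull ?P)) ?L"
      by (rule linear_continuous_on[OF linear_conv_bounded_linear[THEN iffD1, OF linear_LgE]])
    ultimately have "?L ` closure (convex hull ?P) \<subseteq> K"
      using image_closure_subset[OF _ cK(1)] by blast
    then show ?thesis unfolding K_def .
  qed
  have nrm: "norm (LgE RA RM RM' g S) = norm S" if g: "g \<in> carrier G" for g S
    using g by (simp add: LgE_def norm_prod_def norm_lcomp rep_unitary[OF rA] rep_unitary[OF rM]
        rep_unitary[OF rN] qunitary_kron)
  have "LgE RA RM RM' g S0 = S0" if g: "g \<in> carrier G" for g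
  proof -
    have m: "LgE RA RM RM' g S0 \<in> K" using inv[OF g] S0K by blast
    have "\<forall>y\<in>K. dist 0 (LgE RA RM RM' g S0) \<le> dist 0 y"
      using min nrm[OF g] by (simp add: dist_0_norm)
    from closest_point_unique[OF cK(2) cK(1) m this] show ?thesis by (simp add: S0_def)
  qed
  then show ?thesis using S0K by blast
qed

lemma ptrace_conj: assumes "qunitary B"
  shows "ptrace (qmul (qmul (kron A B) X) (qadj (kron A B))) = qmul (qmul A (ptrace X)) (qadj A)"
proof -
  have k1: "kron A B = qmul (kron A qid) (kron qid B)" by (simp add: kron_mult)
  have k2: "qadj (kron A B) = qmul (kron qid (qadj B)) (kron (qadj A) qid)" by (simp add: kron_mult qadj_kron)
  have "qmul (qmul (kron A B) X) (qadj (kron A B)) =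
        qmul (qmul (kron A qid) (qmul (qmul (kron qid B) X) (kron qid (qadj B)))) (kron (qadj A) qid)"
    by (subst k2, subst k1, simp add: qmul_assoc)
  then show ?thesis by (simp add: pt1 pt2 qunitary_D(2)[OF assms])
qed

lemma lin_A: "linear fst" by (rule linearI) auto
lemma lin_M: "linear (\<lambda>S. fst (snd S))" by (rule linearI) auto
lemma lin_N: "linear (\<lambda>S. snd (snd S))" by (rule linearI) auto

lemma good:
  fixes G :: "'g monoid"
    and RA :: "'g \<Rightarrow> 'a::finite qop" and RM :: "'g \<Rightarrow> 'm::finite qop"
    and RM' :: "'g \<Rightarrow> 'n::finite qop"
  assumes comp: "compatible G RA RM RM' \<psi>0 orc Pis"
   and pr: "protocol \<psi>0 orc Pis T P \<rho> \<rho>t \<rho>'"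
   and SK: "S \<in> closure (convex hull (PsiE RA RM RM' ` carrier G))"
  shows "(\<forall>t\<in>query_times orc T. qpositive (sapp (fst (snd S)) (\<rho>t t))) \<and>
    (\<forall>t\<in>query_times orc T. qpositive (sapp (fst S) (\<rho> t))) \<and>
    (\<forall>X. ptrace (sapp (fst (snd S)) X) = sapp (fst S) (ptrace X)) \<and>
    (\<forall>X. ptrace (sapp (snd (snd S)) X) = sapp (fst S) (ptrace X)) \<and>
    sapp (fst S) (qproj \<psi>0) = qproj \<psi>0 \<and>
    (\<forall>B\<in>{qoracle_op orc, qadj (qoracle_op orc)}. \<forall>X. sapp (fst (snd S)) (qmul B X) = qmul B (sapp (fst (snd S)) X)) \<and>
    (\<forall>B\<in>{qoracle_op orc, qadj (qoracle_op orc)}. \<forall>X. sapp (fst (snd S)) (qmul X B) = qmul (sapp (fst (snd S)) X) B) \<and>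
    qpositive (sapp (snd (snd S)) \<rho>') \<and>
    (\<forall>Pr\<in>Pis. P \<le> Re (qtrace (qmul Pr (sapp (snd (snd S)) \<rho>'))))"
    (is "?good S")
proof -
  define Good where "Good = {S. ?good S}"
  have ccG: "cc Good" unfolding Good_def
    by (intro cc_conj cc_ball cc_all cc_pos cc_eqFc cc_eqF cc_ge lin_sapp lin_ptrace lin_qmul_l lin_qmul_r
        lin_trace lin_A lin_M lin_N)
  have G: "group G" and rA: "unitary_rep G RA" and rM: "unitary_rep G RM" and rN: "unitary_rep G RM'"
    and fixpsi: "\<forall>g\<in>carrier G. qapply (RA g) \<psi>0 = \<psi>0"
    and opc: "\<forall>g\<in>carrier G. conj_by (kron (RA g) (RM g)) (qoracle_op orc)
                        (kron (RA (inv\<^bsub>G\<^esub> g)) (RM (inv\<^bsub>G\<^esub> g))) = qoracle_op orc"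
    and pisc: "\<forall>g\<in>carrier G. (\<lambda>Pr. conj_by (kron (RA g) (RM' g)) Pr
                        (kron (RA (inv\<^bsub>G\<^esub> g)) (RM' (inv\<^bsub>G\<^esub> g)))) ` Pis = Pis"
    using comp by (auto simp: compatible_def)
  have pt: "\<forall>t\<in>query_times orc T. qpositive (\<rho> t) \<and> qpositive (\<rho>t t) \<and> ptrace (\<rho>t t) = \<rho> t"
    and r0: "\<rho> 0 = qproj \<psi>0" and rpos: "qpositive \<rho>'"
    and pis: "\<forall>Pr\<in>Pis. P \<le> Re (qtrace (qmul Pr \<rho>'))"
    using pr by (auto simp: protocol_def)
  have PG: "PsiE RA RM RM' h \<in> Good" if h: "h \<in> carrier G" for h
  proof -
    define A where "A = RA h"
    define QM where "QM = kron (RA h) (RM h)"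
    define QN where "QN = kron (RA h) (RM' h)"
    have uA: "qunitary A" unfolding A_def by (rule rep_unitary[OF rA h])
    have uMM: "qunitary (RM h)" by (rule rep_unitary[OF rM h])
    have uNN: "qunitary (RM' h)" by (rule rep_unitary[OF rN h])
    have uM: "qunitary QM" unfolding QM_def by (intro qunitary_kron rep_unitary[OF rA h] uMM)
    have uN: "qunitary QN" unfolding QN_def by (intro qunitary_kron rep_unitary[OF rA h] uNN)
    have ih: "inv\<^bsub>G\<^esub> h \<in> carrier G" using G h by (simp add: group.inv_closed)
    have adjM: "kron (RA (inv\<^bsub>G\<^esub> h)) (RM (inv\<^bsub>G\<^esub> h)) = qadj QM"
      unfolding QM_def by (simp add: rep_inv[OF G rA h] rep_inv[OF G rM h] qadj_kron)
    have adjN: "kron (RA (inv\<^bsub>G\<^esub> h)) (RM' (inv\<^bsub>G\<^esub> h)) = qadj QN"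
      unfolding QN_def by (simp add: rep_inv[OF G rA h] rep_inv[OF G rN h] qadj_kron)
    have ps: "PsiE RA RM RM' h = (adS A, adS QM, adS QN)"
      by (simp add: PsiE_def A_def QM_def QN_def)
    have opB: "qmul (qmul QM B) (qadj QM) = B" if "B \<in> {qoracle_op orc, qadj (qoracle_op orc)}" for B
    proof -
      have o1: "conj_by (kron (RA h) (RM h)) (qoracle_op orc) (kron (RA (inv\<^bsub>G\<^esub> h)) (RM (inv\<^bsub>G\<^esub> h))) = qoracle_op orc"
        using opc h by blast
      have o: "qmul (qmul QM (qoracle_op orc)) (qadj QM) = qoracle_op orc"
        using o1 unfolding conj_by_def by (simp only: adjM QM_def[symmetric])
      show ?thesis using that o comm_conj_adj[OF uM o] by auto
    qed
    have c1: "\<forall>t\<in>query_times orc T. qpositive (sapp (adS QM) (\<rho>t t))"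
      using pt by (simp add: sapp_adS pos_conj)
    have c2: "\<forall>t\<in>query_times orc T. qpositive (sapp (adS A) (\<rho> t))"
      using pt by (simp add: sapp_adS pos_conj)
    have c3: "\<forall>X. ptrace (sapp (adS QM) X) = sapp (adS A) (ptrace X)"
      by (simp add: sapp_adS QM_def A_def ptrace_conj[OF uMM])
    have c4: "\<forall>X. ptrace (sapp (adS QN) X) = sapp (adS A) (ptrace X)"
      by (simp add: sapp_adS QN_def A_def ptrace_conj[OF uNN])
    have c5: "sapp (adS A) (qproj \<psi>0) = qproj \<psi>0"
      using fixpsi h by (simp add: sapp_adS A_def qproj_conj)
    have c6: "\<forall>B\<in>{qoracle_op orc, qadj (qoracle_op orc)}. \<forall>X. sapp (adS QM) (qmul B X) = qmul B (sapp (adS QM) X)"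
      using sapp_adS_comm(1)[OF uM opB] by blast
    have c7: "\<forall>B\<in>{qoracle_op orc, qadj (qoracle_op orc)}. \<forall>X. sapp (adS QM) (qmul X B) = qmul (sapp (adS QM) X) B"
      using sapp_adS_comm(2)[OF uM opB] by blast
    have c8: "qpositive (sapp (adS QN) \<rho>')"
      using rpos by (simp add: sapp_adS pos_conj)
    have c9: "\<forall>Pr\<in>Pis. P \<le> Re (qtrace (qmul Pr (sapp (adS QN) \<rho>')))"
    proof
      fix Pr assume Pr: "Pr \<in> Pis"
      have ii: "inv\<^bsub>G\<^esub> (inv\<^bsub>G\<^esub> h) = h" using G h by (simp add: group.inv_inv)
      have "conj_by (kron (RA (inv\<^bsub>G\<^esub> h)) (RM' (inv\<^bsub>G\<^esub> h))) Pr
              (kron (RA (inv\<^bsub>G\<^esub> (inv\<^bsub>G\<^esub> h))) (RM' (inv\<^bsub>G\<^esub> (inv\<^bsub>G\<^esub> h)))) \<in> Pis"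
      proof -
        have e: "(\<lambda>Pr. conj_by (kron (RA (inv\<^bsub>G\<^esub> h)) (RM' (inv\<^bsub>G\<^esub> h))) Pr
              (kron (RA (inv\<^bsub>G\<^esub> (inv\<^bsub>G\<^esub> h))) (RM' (inv\<^bsub>G\<^esub> (inv\<^bsub>G\<^esub> h))))) ` Pis = Pis"
          using pisc ih by (rule bspec)
        show ?thesis by (subst e[symmetric], rule imageI[OF Pr])
      qed
      then have "qmul (qmul (qadj QN) Pr) QN \<in> Pis"
        unfolding ii conj_by_def by (simp only: adjN QN_def[symmetric])
      then show "P \<le> Re (qtrace (qmul Pr (sapp (adS QN) \<rho>')))"
        using pis by (simp add: sapp_adS trace_conj)
    qed
    show ?thesis unfolding Good_def mem_Collect_eq ps fst_conv snd_conv
      by (intro conjI c1 c2 c3 c4 c5 c6 c7 c8 c9)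
  qed
  have "closure (convex hull (PsiE RA RM RM' ` carrier G)) \<subseteq> Good"
    using ccG PG unfolding cc_def
    by (intro closure_minimal hull_minimal) auto
  then have "S \<in> Good" using SK by (rule subsetD)
  then show ?thesis unfolding Good_def mem_Collect_eq .
qed

lemma sapp_diff: "sapp S (\<lambda>x y. A x y - B x y) = (\<lambda>x y. sapp S A x y - sapp S B x y)"
  by (simp add: sapp_def fun_eq_iff algebra_simps sum_subtractf)

lemma sapp_cmul_sum: "(\<Sum>k\<in>UNIV. \<Sum>l\<in>UNIV. S $ (i,j,k,l) * (c * Y k l)) = c * sapp S Y i j"
  by (simp add: sapp_def sum_distrib_left mult_ac)

theorem lemma1:
  fixes G :: "'g monoid"
    and RA :: "'g \<Rightarrow> 'a::finite qop" and RM :: "'g \<Rightarrow> 'm::finite qop"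
    and RM' :: "'g \<Rightarrow> 'n::finite qop"
    and \<psi>0 :: "'a \<Rightarrow> complex" and orc :: "('a \<times> 'm) qoracle"
    and Pis :: "('a \<times> 'n) qop set" and T :: real
  assumes "unit_vec \<psi>0"
    and "qoracle_wf orc"
    and "\<forall>Pr\<in>Pis. qpositive Pr"
    and "compatible G RA RM RM' \<psi>0 orc Pis"
  shows "{P. \<exists>\<rho> \<rho>t \<rho>'. protocol \<psi>0 orc Pis T P \<rho> \<rho>t \<rho>'} =
         {P. \<exists>\<rho> \<rho>t \<rho>'. protocol \<psi>0 orc Pis T P \<rho> \<rho>t \<rho>' \<and>
                         invariant_protocol G RA RM RM' orc T \<rho>t \<rho>'}"
proof
  show "{P. \<exists>\<rho> \<rho>t \<rho>'. protocol \<psi>0 orc Pis T P \<rho> \<rho>t \<rho>' \<and>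
                         invariant_protocol G RA RM RM' orc T \<rho>t \<rho>'} \<subseteq> {P. \<exists>\<rho> \<rho>t \<rho>'. protocol \<psi>0 orc Pis T P \<rho> \<rho>t \<rho>'}"
    by blast
next
  have G: "group G" and rA: "unitary_rep G RA" and rM: "unitary_rep G RM" and rN: "unitary_rep G RM'"
    using assms(4) by (auto simp: compatible_def)
  obtain S0 where S0K: "S0 \<in> closure (convex hull (PsiE RA RM RM' ` carrier G))"
    and fixS: "\<forall>g\<in>carrier G. LgE RA RM RM' g S0 = S0"
    using fixed_point[OF G rA rM rN] by blast
  define SA where "SA = fst S0"
  define SM where "SM = fst (snd S0)"
  define SN where "SN = snd (snd S0)"
  show "{P. \<exists>\<rho> \<rho>t \<rho>'. protocol \<psi>0 orc Pis T P \<rho> \<rho>t \<rho>'} \<subseteq> {P. \<exists>\<rho> \<rho>t \<rho>'. protocol \<psi>0 orc Pis T P \<rho> \<rho>t \<rho>' \<and>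
                         invariant_protocol G RA RM RM' orc T \<rho>t \<rho>'}"
  proof
    fix P assume "P \<in> {P. \<exists>\<rho> \<rho>t \<rho>'. protocol \<psi>0 orc Pis T P \<rho> \<rho>t \<rho>'}"
    then obtain \<rho> \<rho>t \<rho>' where pr: "protocol \<psi>0 orc Pis T P \<rho> \<rho>t \<rho>'" by blast
    note gd = good[OF assms(4) pr S0K, folded SA_def SM_def SN_def]
    have g1: "\<forall>t\<in>query_times orc T. qpositive (sapp SM (\<rho>t t))" using gd by blast
    have g2: "\<forall>t\<in>query_times orc T. qpositive (sapp SA (\<rho> t))" using gd by blast
    have g3: "\<And>X. ptrace (sapp SM X) = sapp SA (ptrace X)" using gd by blast
    have g4: "\<And>X. ptrace (sapp SN X) = sapp SA (ptrace X)" using gd by blast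
    have g5: "sapp SA (qproj \<psi>0) = qproj \<psi>0" using gd by blast
    have g6: "\<And>B X. B \<in> {qoracle_op orc, qadj (qoracle_op orc)} \<Longrightarrow> sapp SM (qmul B X) = qmul B (sapp SM X)"
      using gd by blast
    have g7: "\<And>B X. B \<in> {qoracle_op orc, qadj (qoracle_op orc)} \<Longrightarrow> sapp SM (qmul X B) = qmul (sapp SM X) B"
      using gd by blast
    have g8: "qpositive (sapp SN \<rho>')" using gd by blast
    have g9: "\<forall>Pr\<in>Pis. P \<le> Re (qtrace (qmul Pr (sapp SN \<rho>')))" using gd by blast
    have pt: "\<forall>t\<in>query_times orc T. qpositive (\<rho> t) \<and> qpositive (\<rho>t t) \<and> ptrace (\<rho>t t) = \<rho> t"
      and r0: "\<rho> 0 = qproj \<psi>0" and rT: "ptrace \<rho>' = \<rho> T"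
      and cs: "case orc of
        Discrete U \<Delta> \<Rightarrow>
          (\<exists>N::nat. T = real N * \<Delta>) \<and>
          (\<forall>k::nat. real (Suc k) * \<Delta> \<le> T \<longrightarrow>
             \<rho> (real (Suc k) * \<Delta>) = ptrace (qmul (qmul U (\<rho>t (real k * \<Delta>))) (qadj U)))
      | Continuous H \<Rightarrow>
          0 \<le> T \<and>
          (\<forall>i j. continuous_on {0..T} (\<lambda>s. \<rho>t s i j)) \<and>
          (\<forall>t\<in>{0..T}. \<forall>i j.
             ((\<lambda>s. \<rho> s i j) has_vector_derivative
                (- \<i> * ptrace (\<lambda>x y. qmul H (\<rho>t t) x y - qmul (\<rho>t t) H x y) i j))
             (at t within {0..T}))"
      using pr by (auto simp: protocol_def)
    define \<rho>2 where "\<rho>2 = (\<lambda>t. sapp SA (\<rho> t))"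
    define \<rho>t2 where "\<rho>t2 = (\<lambda>t. sapp SM (\<rho>t t))"
    define \<rho>'2 where "\<rho>'2 = sapp SN \<rho>'"
    have p1: "\<forall>t\<in>query_times orc T. qpositive (\<rho>2 t) \<and> qpositive (\<rho>t2 t) \<and> ptrace (\<rho>t2 t) = \<rho>2 t"
      using pt g1 g2 by (simp add: \<rho>2_def \<rho>t2_def g3)
    have p2: "\<rho>2 0 = qproj \<psi>0" by (simp add: \<rho>2_def r0 g5)
    have p3: "case orc of
        Discrete U \<Delta> \<Rightarrow>
          (\<exists>N::nat. T = real N * \<Delta>) \<and>
          (\<forall>k::nat. real (Suc k) * \<Delta> \<le> T \<longrightarrow>
             \<rho>2 (real (Suc k) * \<Delta>) = ptrace (qmul (qmul U (\<rho>t2 (real k * \<Delta>))) (qadj U)))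
      | Continuous H \<Rightarrow>
          0 \<le> T \<and>
          (\<forall>i j. continuous_on {0..T} (\<lambda>s. \<rho>t2 s i j)) \<and>
          (\<forall>t\<in>{0..T}. \<forall>i j.
             ((\<lambda>s. \<rho>2 s i j) has_vector_derivative
                (- \<i> * ptrace (\<lambda>x y. qmul H (\<rho>t2 t) x y - qmul (\<rho>t2 t) H x y) i j))
             (at t within {0..T}))"
    proof (cases orc)
      case (Discrete U \<Delta>)
      have comU: "sapp SA (ptrace (qmul (qmul U X) (qadj U))) = ptrace (qmul (qmul U (sapp SM X)) (qadj U))" for X
      proof -
        have "sapp SA (ptrace (qmul (qmul U X) (qadj U))) = ptrace (sapp SM (qmul (qmul U X) (qadj U)))"
          by (simp add: g3)
        also have "\<dots> = ptrace (qmul (sapp SM (qmul U X)) (qadj U))"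
          using g7[of "qadj U"] Discrete by simp
        also have "\<dots> = ptrace (qmul (qmul U (sapp SM X)) (qadj U))"
          using g6[of U] Discrete by simp
        finally show ?thesis .
      qed
      show ?thesis using cs Discrete by (simp add: \<rho>2_def \<rho>t2_def comU)
    next
      case (Continuous H)
      have T0: "0 \<le> T" and cont: "\<And>i j. continuous_on {0..T} (\<lambda>s. \<rho>t s i j)"
        and der: "\<And>t i j. t \<in> {0..T} \<Longrightarrow> ((\<lambda>s. \<rho> s i j) has_vector_derivative
                (- \<i> * ptrace (\<lambda>x y. qmul H (\<rho>t t) x y - qmul (\<rho>t t) H x y) i j))
             (at t within {0..T})"
        using cs Continuous by auto
      have c2: "continuous_on {0..T} (\<lambda>s. \<rho>t2 s i j)" for i j
        unfolding \<rho>t2_def sapp_def by (intro continuous_intros cont)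
      have d2: "((\<lambda>s. \<rho>2 s i j) has_vector_derivative
                (- \<i> * ptrace (\<lambda>x y. qmul H (\<rho>t2 t) x y - qmul (\<rho>t2 t) H x y) i j))
             (at t within {0..T})" if t: "t \<in> {0..T}" for t i j
      proof -
        define C where "C = (\<lambda>x y. qmul H (\<rho>t t) x y - qmul (\<rho>t t) H x y)"
        have "((\<lambda>s. \<Sum>k\<in>UNIV. \<Sum>l\<in>UNIV. SA $ (i,j,k,l) * \<rho> s k l) has_vector_derivative
               (\<Sum>k\<in>UNIV. \<Sum>l\<in>UNIV. SA $ (i,j,k,l) * (- \<i> * ptrace C k l))) (at t within {0..T})"
          unfolding C_def by (intro has_vector_derivative_sum has_vector_derivative_mult_right der t)
        moreover have "(\<Sum>k\<in>UNIV. \<Sum>l\<in>UNIV. SA $ (i,j,k,l) * (- \<i> * ptrace C k l)) =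
            - \<i> * ptrace (\<lambda>x y. qmul H (\<rho>t2 t) x y - qmul (\<rho>t2 t) H x y) i j"
        proof -
          have "(\<Sum>k\<in>UNIV. \<Sum>l\<in>UNIV. SA $ (i,j,k,l) * (- \<i> * ptrace C k l)) = - \<i> * sapp SA (ptrace C) i j"
            by (rule sapp_cmul_sum)
          also have "sapp SA (ptrace C) = ptrace (sapp SM C)" by (simp add: g3)
          also have "sapp SM C = (\<lambda>x y. qmul H (\<rho>t2 t) x y - qmul (\<rho>t2 t) H x y)"
            unfolding C_def sapp_diff \<rho>t2_def
            using g6[of H] g7[of H] Continuous by simp
          finally show ?thesis .
        qed
        ultimately show ?thesis unfolding \<rho>2_def sapp_def by simp
      qed
      show ?thesis using Continuous T0 c2 d2 by simp
    qed
    have p4: "qpositive \<rho>'2" using g8 by (simp add: \<rho>'2_def)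
    have p5: "ptrace \<rho>'2 = \<rho>2 T" by (simp add: \<rho>'2_def \<rho>2_def g4 rT)
    have p6: "\<forall>Pr\<in>Pis. P \<le> Re (qtrace (qmul Pr \<rho>'2))" using g9 by (simp add: \<rho>'2_def)
    have prot: "protocol \<psi>0 orc Pis T P \<rho>2 \<rho>t2 \<rho>'2"
      unfolding protocol_def using p1 p2 p3 p4 p5 p6 by blast
    have inv: "invariant_protocol G RA RM RM' orc T \<rho>t2 \<rho>'2"
      unfolding invariant_protocol_def
    proof (intro conjI ballI)
      fix g t assume g: "g \<in> carrier G" and t: "t \<in> query_times orc T"
      have l: "lcomp (kron (RA g) (RM g)) SM = SM"
        using fixS g unfolding SM_def by (metis LgE_def fst_conv snd_conv)
      show "conj_by (kron (RA g) (RM g)) (\<rho>t2 t) (kron (RA (inv\<^bsub>G\<^esub> g)) (RM (inv\<^bsub>G\<^esub> g))) = \<rho>t2 t"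
        unfolding conj_by_def rep_inv[OF G rA g] rep_inv[OF G rM g] qadj_kron[symmetric] \<rho>t2_def
        by (metis sapp_lcomp l)
    next
      fix g assume g: "g \<in> carrier G"
      have l: "lcomp (kron (RA g) (RM' g)) SN = SN"
        using fixS g unfolding SN_def by (metis LgE_def fst_conv snd_conv)
      show "conj_by (kron (RA g) (RM' g)) \<rho>'2 (kron (RA (inv\<^bsub>G\<^esub> g)) (RM' (inv\<^bsub>G\<^esub> g))) = \<rho>'2"
        unfolding conj_by_def rep_inv[OF G rA g] rep_inv[OF G rN g] qadj_kron[symmetric] \<rho>'2_def
        by (metis sapp_lcomp l)
    qed
    show "P \<in> {P. \<exists>\<rho> \<rho>t \<rho>'. protocol \<psi>0 orc Pis T P \<rho> \<rho>t \<rho>' \<and>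
                         invariant_protocol G RA RM RM' orc T \<rho>t \<rho>'}"
      using prot inv by blast
  qed
qed

end
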